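(* Let $p(t)=a+bt+ct^2\in\mathbb C[t]$ with $a\,c\,(a+b+c)\neq 0$, let $V_{p}$ be its associated circulant matrix and $(S_{[k]})_{k\ge1}$ its sequence of column partial sums. Then [$V_{p}$ has a finite period and $(S_{[k]})_{k\geq1}$ is eventually periodic] if and only if [$b=c=-2a$, i.e. $p(t)=a(1-2t-2t^2)$, and $3a$ is a root of unity]. Moreover, in that case the period $\mu$ of $V_p$ satisfies $6\mid\mu$ and $(3a)^{\mu}=1$.
   Context: For a polynomial $p(t)=a_0+a_1t+\cdots+a_dt^d\in\mathbb C[t]$ of degree $d\ge1$ with $a_0\neq0$: the associated circulant matrix $V_p$ is the $(d+1)\times(d+1)$ matrix whose $(i,j)$ entry ($0\le i,j\le d$) is $a_{(i-j-1)\bmod (d+1)}$; thus its first row is $(a_d,a_{d-1},\dots,a_0)$ and each subsequent row is the cyclic right shift of the previous one. Let $e=(0,\dots,0,1)^T\in\mathbb C^{d+1}$. $V_p$ has a finite period if there exist integers $\mu\ge1$, $k_0\ge0$ with $V_p^{n+\mu}e=V_p^ne$ for all $n\ge k_0$; the period of $V_p$ is the smallest such $\mu$. The column partial sums are $S_{[k]}:=[t^{(k-1)(d+1)}]\dfrac{(tp(t))^k}{(1-t)(1-t^{d+1})}$ for $k\ge1$ (equivalently, the sum of the coefficients of $t^0,\dots,t^{(k-1)(d+1)}$ in the power series $(tp(t))^k/(1-t^{d+1})$). Here $d=2$. A sequence $(s_i)$ is eventually periodic if there are $N\ge1$ and $K$ with $s_{i+N}=s_i$ for all $i\ge K$. 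*)

theory Defs
  imports Complex_Main "HOL-Computational_Algebra.Polynomial" "HOL-Computational_Algebra.Formal_Power_Series"
    "HOL-Computational_Algebra.Polynomial_FPS"
begin

definition circ_matrix :: "complex poly \<Rightarrow> nat \<Rightarrow> nat \<Rightarrow> complex" where
  "circ_matrix p i j = coeff p (nat ((int i - int j - 1) mod int (degree p + 1)))"

definition mat_vec :: "nat \<Rightarrow> (nat \<Rightarrow> nat \<Rightarrow> complex) \<Rightarrow> (nat \<Rightarrow> complex) \<Rightarrow> (nat \<Rightarrow> complex)" where
  "mat_vec n A v = (\<lambda>i. if i < n then (\<Sum>j<n. A i j * v j) else 0)"

definition last_unit :: "complex poly \<Rightarrow> nat \<Rightarrow> complex" where
  "last_unit p = (\<lambda>i. if i = degree p then 1 else 0)"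

definition circ_pow_e :: "complex poly \<Rightarrow> nat \<Rightarrow> nat \<Rightarrow> complex" where
  "circ_pow_e p n = (mat_vec (degree p + 1) (circ_matrix p) ^^ n) (last_unit p)"

definition has_finite_period :: "complex poly \<Rightarrow> bool" where
  "has_finite_period p \<longleftrightarrow>
     (\<exists>\<mu>\<ge>1. \<exists>k0. \<forall>n\<ge>k0. circ_pow_e p (n + \<mu>) = circ_pow_e p n)"

definition circ_period :: "complex poly \<Rightarrow> nat" where
  "circ_period p = (LEAST \<mu>. \<mu> \<ge> 1 \<and> (\<exists>k0. \<forall>n\<ge>k0. circ_pow_e p (n + \<mu>) = circ_pow_e p n))"

definition col_sum :: "complex poly \<Rightarrow> nat \<Rightarrow> complex" where
  "col_sum p k = fps_nth ((fps_X * fps_of_poly p) ^ k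
       / ((1 - fps_X) * (1 - fps_X ^ (degree p + 1)))) ((k - 1) * (degree p + 1))"

definition eventually_periodic :: "(nat \<Rightarrow> 'a) \<Rightarrow> bool" where
  "eventually_periodic s \<longleftrightarrow> (\<exists>N\<ge>1. \<exists>K. \<forall>i\<ge>K. s (i + N) = s i)"

definition root_of_unity :: "complex \<Rightarrow> bool" where
  "root_of_unity z \<longleftrightarrow> (\<exists>n>0. z ^ n = 1)"

end

theory Submission
  imports Defs
begin


lemma H_inv: "inverse ((1 - fps_X) * (1 - fps_X ^ 3) :: complex fps) = Abs_fps (\<lambda>m. of_nat (m div 3 + 1))"
proof -
  let ?H = "Abs_fps (\<lambda>m. of_nat (m div 3 + 1) :: complex)"
  let ?T = "Abs_fps (\<lambda>m. if 3 dvd m then 1 else 0 :: complex)"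
  have 1: "?H * (1 - fps_X) = ?T"
  proof (rule fps_ext)
    fix n
    show "fps_nth (?H * (1 - fps_X)) n = fps_nth ?T n"
    proof (cases n)
      case 0 then show ?thesis by (simp add: algebra_simps)
    next
      case (Suc m)
      have "fps_nth (?H * (1 - fps_X)) n = fps_nth ?H n - fps_nth (fps_X * ?H) n" by (simp add: algebra_simps)
      also have "\<dots> = of_nat (Suc m div 3 + 1) - of_nat (m div 3 + 1)"
        using Suc by simp
      also have "\<dots> = fps_nth ?T n" using Suc by (auto simp: div_Suc)
      finally show ?thesis .
    qed
  qed
  have 2: "?T * (1 - fps_X ^ 3) = 1"
  proof (rule fps_ext)
    fix n
    have "fps_nth (?T * (1 - fps_X ^ 3)) n = fps_nth ?T n - fps_nth (fps_X ^ 3 * ?T) n" by (simp add: algebra_simps)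
    also have "\<dots> = fps_nth (1::complex fps) n"
    proof (cases "n < 3")
      case True then show ?thesis by (auto simp: fps_X_power_mult_nth)
    next
      case False
      then have "3 dvd n \<longleftrightarrow> 3 dvd (n - 3)" by (metis dvd_minus_self le_add_diff_inverse not_less)
      with False show ?thesis by (auto simp: fps_X_power_mult_nth)
    qed
    finally show "fps_nth (?T * (1 - fps_X ^ 3)) n = fps_nth (1::complex fps) n" .
  qed
  have "((1 - fps_X) * (1 - fps_X ^ 3)) * ?H = 1"
  proof -
    have "((1 - fps_X) * (1 - fps_X ^ 3)) * ?H = (?H * (1 - fps_X)) * (1 - fps_X ^ 3)"
      by (simp only: mult.commute mult.left_commute)
    also have "\<dots> = 1" unfolding 1 2 ..
    finally show ?thesis .
  qed
  then show ?thesis by (rule fps_inverse_unique)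
qed


lemma col_sum_eq:
  fixes p :: "complex poly"
  assumes deg: "degree p = 2"
  shows "col_sum p (k+1) = (\<Sum>j\<le>2*k+2. coeff (p^(k+1)) j * of_nat ((2*k+2-j) div 3))"
proof -
  define P where "P = p^(k+1)"
  let ?G = "(1 - fps_X) * (1 - fps_X ^ 3) :: complex fps"
  let ?H = "Abs_fps (\<lambda>m. of_nat (m div 3 + 1) :: complex)"
  have G0: "fps_nth ?G 0 \<noteq> 0" by simp
  have F: "(fps_X * fps_of_poly p) ^ (k+1) = fps_X ^ (k+1) * fps_of_poly P"
    by (simp add: P_def power_mult_distrib fps_of_poly_power)
  have "col_sum p (k+1) = fps_nth (fps_X ^ (k+1) * fps_of_poly P * ?H) (3*k)"
    unfolding col_sum_def deg F using fps_divide_unit[OF G0] H_inv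
    by (simp add: mult.commute)
  also have "\<dots> = (\<Sum>i=0..3*k. (if i < k+1 then 0 else coeff P (i-(k+1))) * of_nat ((3*k-i) div 3 + 1))"
  proof -
    have e: "\<And>i. fps_nth (fps_X ^ (k+1) * fps_of_poly P) i = (if i < k+1 then 0 else coeff P (i-(k+1)))"
      by (simp only: fps_X_power_mult_nth fps_of_poly_nth)
    show ?thesis by (simp only: fps_mult_nth[of "fps_X ^ (k+1) * fps_of_poly P"] e fps_nth_Abs_fps)
  qed
  also have "\<dots> = (\<Sum>i\<in>{k+1..3*k}. (if i < k+1 then 0 else coeff P (i-(k+1))) * of_nat ((3*k-i) div 3 + 1))"
    by (rule sum.mono_neutral_right) auto
  also have "\<dots> = (\<Sum>j<2*k. coeff P j * of_nat ((2*k+2-j) div 3))"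
  proof -
    have im: "{k+1..3*k} = (\<lambda>j. j+(k+1)) ` {..<2*k}"
    proof (rule set_eqI, rule iffI)
      fix x assume "x \<in> {k+1..3*k}"
      then have "x = (x - (k+1)) + (k+1)" and "x - (k+1) \<in> {..<2*k}" by auto
      then show "x \<in> (\<lambda>j. j+(k+1)) ` {..<2*k}" by blast
    qed auto
    have ar: "\<And>x. x < 2*k \<Longrightarrow> (2*k+2-x) div 3 = (2*k - Suc x) div 3 + 1"
    proof -
      fix x :: nat assume "x < 2*k"
      then have "2*k+2-x = (2*k - Suc x) + 1 * 3" by arith
      then show "(2*k+2-x) div 3 = (2*k - Suc x) div 3 + 1" by (simp only: div_mult_self1)
    qed
    have ar2: "\<And>x. x < 2*k \<Longrightarrow> complex_of_nat ((Suc (Suc (2 * k)) - x) div 3) = 1 + complex_of_nat ((2 * k - Suc x) div 3)"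
      using ar by simp
    show ?thesis unfolding im
      by (subst sum.reindex) (auto intro!: sum.cong simp: inj_on_def ar2)
  qed
  also have "\<dots> = (\<Sum>j\<le>2*k+2. coeff P j * of_nat ((2*k+2-j) div 3))"
    by (rule sum.mono_neutral_left) auto
  finally show ?thesis unfolding P_def .
qed


definition om :: complex where "om = Complex (-1/2) (sqrt 3/2)"

lemma om_sq: "om^2 + om + 1 = 0"
  by (simp add: om_def complex_eq_iff power2_eq_square)

lemma om3: "om^3 = 1"
proof -
  have "om^3 - 1 = (om - 1) * (om^2 + om + 1)" by (simp add: algebra_simps power2_eq_square power3_eq_cube)
  then show ?thesis using om_sq by simp
qed

lemma cnj_om: "cnj om = om^2"
  by (simp add: om_def complex_eq_iff power2_eq_square)

lemma om_ne1: "om \<noteq> 1" by (simp add: om_def complex_eq_iff)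
lemma om2_ne1: "om^2 \<noteq> 1" using om_sq om_ne1 by (auto simp: om_def complex_eq_iff power2_eq_square)
lemma om_ne0: "om \<noteq> 0" by (simp add: om_def complex_eq_iff)

lemma om_pow_mod: "om^n = om^(n mod 3)"
proof -
  have "om^n = om^(3 * (n div 3) + n mod 3)" by simp
  also have "\<dots> = (om^3)^(n div 3) * om^(n mod 3)" by (simp only: power_add power_mult)
  finally show ?thesis by (simp add: om3)
qed

lemma om_pow_sub: "j \<le> n \<Longrightarrow> om^(n-j) = om^n * (om^2)^j"
proof -
  assume "j \<le> n"
  then have "om^(n-j) * (om^3)^j = om^n * (om^2)^j"
    by (simp add: power_add[symmetric] power_mult[symmetric]) (simp add: algebra_simps)
  then show ?thesis by (simp add: om3)
qed

lemma mod3_formula: "of_nat (m mod 3) = 1 + (om^m*(om^2+2*om) + (om^m)^2*(om+2*om^2))/3"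
proof -
  have h: "m mod 3 = 0 \<or> m mod 3 = 1 \<or> m mod 3 = 2" by arith
  have e: "om^m = om^(m mod 3)" by (rule om_pow_mod)
  from h show ?thesis
  proof (elim disjE)
    assume m: "m mod 3 = 0"
    show ?thesis unfolding e m apply (simp add: field_simps) using om_sq by algebra
  next
    assume m: "m mod 3 = 1"
    show ?thesis unfolding e m apply (simp add: field_simps) using om_sq by algebra
  next
    assume m: "m mod 3 = 2"
    show ?thesis unfolding e m apply (simp add: field_simps) using om_sq by algebra
  qed
qed


lemma poly_sum: fixes P :: "complex poly" assumes "degree P \<le> N" shows "poly P x = (\<Sum>j\<le>N. coeff P j * x^j)"
  unfolding poly_altdef using assms
  by (intro sum.mono_neutral_left) (auto simp: coeff_eq_0)

lemma pderiv_sum: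
  fixes P :: "complex poly"
  assumes "degree P \<le> N"
  shows "poly (pderiv P) 1 = (\<Sum>j\<le>N. of_nat j * coeff P j)"
proof -
  have dp: "degree (pderiv P) \<le> N" using assms degree_pderiv[of P] by simp
  have "poly (pderiv P) 1 = (\<Sum>j\<le>N. coeff (pderiv P) j * 1^j)" by (rule poly_sum[OF dp])
  also have "\<dots> = (\<Sum>j\<le>N. of_nat (Suc j) * coeff P (Suc j))" by (simp add: coeff_pderiv)
  also have "\<dots> = (\<Sum>j\<le>Suc N. of_nat j * coeff P j)"
    by (subst sum.atMost_Suc_shift) simp
  also have "\<dots> = (\<Sum>j\<le>N. of_nat j * coeff P j)"
    using assms by (simp add: coeff_eq_0)
  finally show ?thesis .
qed

lemma om4: "om^4 = om"
proof -
  have "om^4 = om^3 * om" by (simp add: power_Suc2 numeral_Bit0 numeral_Bit1)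
  then show ?thesis by (simp add: om3)
qed

lemma pow_term:
  assumes "j \<le> N"
  shows "9 * complex_of_nat ((N - j) div 3) = 3 * of_nat N - 3 * of_nat j - 3
     - om^N*(om^2+2*om)*(om^2)^j - om^(2*N)*(om+2*om^2)*om^j"
proof -
  define m where "m = N - j"
  have "m = 3 * (m div 3) + m mod 3" by simp
  then have "complex_of_nat m = 3 * of_nat (m div 3) + of_nat (m mod 3)"
    by (metis of_nat_add of_nat_mult of_nat_numeral)
  then have 1: "9 * complex_of_nat (m div 3) = 3 * of_nat m - 3 * of_nat (m mod 3)" by simp
  have 2: "complex_of_nat m = of_nat N - of_nat j" using assms by (simp add: m_def of_nat_diff)
  have 3: "om^m = om^N*(om^2)^j" using om_pow_sub[OF assms] by (simp add: m_def)
  have 4: "(om^m)^2 = om^(2*N)*om^j"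
  proof -
    have "((om^2)^j)^2 = (om^4)^j" by (simp add: power_mult[symmetric] mult.commute)
    then have "((om^2)^j)^2 = om^j" by (simp add: om4)
    then show ?thesis unfolding 3 by (simp add: power_mult_distrib power_mult[symmetric] mult.commute)
  qed
  show ?thesis unfolding m_def[symmetric] 1 mod3_formula 2 4 unfolding 3
    by (simp add: algebra_simps)
qed


lemma col_closed:
  fixes a b c :: complex
  assumes c: "c \<noteq> 0"
  shows "9 * col_sum [:a,b,c:] (k+1) = 3*of_nat(k+1)*(a+b+c)^k*(2*a+b) - 3*(a+b+c)^(k+1)
     - (om^2+2*om)*om^(2*k+2)*(poly [:a,b,c:] (om^2))^(k+1)
     - (om+2*om^2)*om^(4*k+4)*(poly [:a,b,c:] om)^(k+1)"
proof -
  define p where "p = [:a,b,c:]"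
  define N where "N = 2*k+2"
  define P where "P = p^(k+1)"
  have deg: "degree p = 2" using c by (simp add: p_def)
  have dP: "degree P \<le> N" unfolding P_def N_def using degree_power_le[of p "k+1"] deg by simp
  have "9 * col_sum p (k+1) = (\<Sum>j\<le>N. coeff P j * (9 * of_nat ((N-j) div 3)))"
    unfolding col_sum_eq[OF deg] P_def N_def by (simp add: sum_distrib_left algebra_simps)
  also have "\<dots> = (\<Sum>j\<le>N. (3 * of_nat N - 3) * coeff P j - 3 * (of_nat j * coeff P j)
     - (om^N*(om^2+2*om)) * (coeff P j * (om^2)^j) - (om^(2*N)*(om+2*om^2)) * (coeff P j * om^j))"
    by (rule sum.cong) (auto simp: pow_term algebra_simps)
  also have "\<dots> = (3 * of_nat N - 3) * poly P 1 - 3 * poly (pderiv P) 1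
     - (om^N*(om^2+2*om)) * poly P (om^2) - (om^(2*N)*(om+2*om^2)) * poly P om"
    unfolding poly_sum[OF dP] pderiv_sum[OF dP]
    by (simp add: sum_subtractf sum_distrib_left)
  also have "\<dots> = 3*of_nat(k+1)*(a+b+c)^k*(2*a+b) - 3*(a+b+c)^(k+1)
     - (om^2+2*om)*om^(2*k+2)*(poly p (om^2))^(k+1)
     - (om+2*om^2)*om^(4*k+4)*(poly p om)^(k+1)"
  proof -
    have pd: "poly (pderiv P) 1 = of_nat (k+1) * (a+b+c)^k * (b + 2*c)"
      unfolding P_def using pderiv_power_Suc[of p k]
      by (simp add: p_def pderiv_pCons algebra_simps)
    have p1: "poly P 1 = (a+b+c)^(k+1)" by (simp add: P_def p_def poly_power del: power_Suc) (simp add: algebra_simps)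
    have "2*N = 4*k+4" by (simp add: N_def)
    then have n1: "om^(2*N) = om^(4*k+4)" "om^N = om^(2*k+2)" "of_nat N = (2 * of_nat (k+1) :: complex)"
      by (simp_all only: N_def) simp
    show ?thesis unfolding pd p1 n1
      by (simp add: P_def poly_power algebra_simps)
  qed
  finally show ?thesis unfolding p_def .
qed


definition Fo :: "complex \<Rightarrow> (nat \<Rightarrow> complex) \<Rightarrow> complex" where
  "Fo z x = x 0 + z * x 1 + z^2 * x 2"

lemma circ_entries:
  assumes "c \<noteq> 0"
  shows "circ_matrix [:a,b,c:] 0 0 = c" "circ_matrix [:a,b,c:] 0 1 = b" "circ_matrix [:a,b,c:] 0 2 = a"
        "circ_matrix [:a,b,c:] 1 0 = a" "circ_matrix [:a,b,c:] 1 1 = c" "circ_matrix [:a,b,c:] 1 2 = b"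
        "circ_matrix [:a,b,c:] 2 0 = b" "circ_matrix [:a,b,c:] 2 1 = a" "circ_matrix [:a,b,c:] 2 2 = c"
  using assms by (simp_all add: circ_matrix_def numeral_2_eq_2)

lemma circ_entries':
  assumes "c \<noteq> 0"
  shows "circ_matrix [:a,b,c:] 0 (Suc 0) = b" "circ_matrix [:a,b,c:] (Suc 0) 0 = a"
        "circ_matrix [:a,b,c:] (Suc 0) (Suc 0) = c" "circ_matrix [:a,b,c:] (Suc 0) 2 = b"
        "circ_matrix [:a,b,c:] 2 (Suc 0) = a"
  using circ_entries[OF assms] by simp_all

lemma Fo_step:
  assumes c: "c \<noteq> 0" and z: "z^3 = 1"
  shows "Fo z (mat_vec 3 (circ_matrix [:a,b,c:]) x) = z * poly [:a,b,c:] z * Fo z x"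
proof -
  have "Fo z (mat_vec 3 (circ_matrix [:a,b,c:]) x) =
     (c * x 0 + b * x 1 + a * x 2) + z * (a * x 0 + c * x 1 + b * x 2) + z^2 * (b * x 0 + a * x 1 + c * x 2)"
  proof -
    have s3: "{..<3::nat} = {0,1,2}" by auto
    show ?thesis unfolding Fo_def mat_vec_def s3 by (simp add: circ_entries[OF c] circ_entries'[OF c] add.assoc)
  qed
  also have "\<dots> = z * poly [:a,b,c:] z * Fo z x"
    unfolding Fo_def using z by simp algebra
  finally show ?thesis .
qed

lemma circ_pow_e_Suc: "circ_pow_e p (Suc n) = mat_vec (degree p + 1) (circ_matrix p) (circ_pow_e p n)"
  by (simp add: circ_pow_e_def)

lemma Fo_pow:
  assumes c: "c \<noteq> 0" and z: "z^3 = 1"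
  shows "Fo z (circ_pow_e [:a,b,c:] n) = (z * poly [:a,b,c:] z)^n * z^2"
proof (induction n)
  case 0 then show ?case using c by (simp add: circ_pow_e_def Fo_def last_unit_def)
next
  case (Suc n)
  have d: "degree [:a,b,c:] + 1 = 3" using c by simp
  show ?case unfolding circ_pow_e_Suc d Fo_step[OF c z] Suc by simp
qed

lemma circ_supp:
  assumes c: "c \<noteq> 0" and i: "3 \<le> i"
  shows "circ_pow_e [:a,b,c:] n i = 0"
proof (cases n)
  case 0 then show ?thesis using c i by (simp add: circ_pow_e_def last_unit_def)
next
  case (Suc m) then show ?thesis using c i by (simp add: circ_pow_e_Suc mat_vec_def)
qed

lemma Fo_inv:
  assumes x: "\<And>i. 3 \<le> i \<Longrightarrow> x i = 0" and y: "\<And>i. 3 \<le> i \<Longrightarrow> y i = 0"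
    and e1: "Fo 1 x = Fo 1 y" and e2: "Fo om x = Fo om y" and e3: "Fo (om^2) x = Fo (om^2) y"
  shows "x = y"
proof -
  define d0 where "d0 = x 0 - y 0"
  define d1 where "d1 = x 1 - y 1"
  define d2 where "d2 = x 2 - y 2"
  have h1: "d0 + d1 + d2 = 0" using e1 by (simp add: Fo_def d0_def d1_def d2_def algebra_simps)
  have h2: "d0 + om * d1 + om^2 * d2 = 0" using e2 by (simp add: Fo_def d0_def d1_def d2_def algebra_simps)
  have h3: "d0 + om^2 * d1 + (om^2)^2 * d2 = 0" using e3 by (simp add: Fo_def d0_def d1_def d2_def algebra_simps)
  have "3 * d0 = 0" using h1 h2 h3 om_sq by algebra
  moreover have "3 * d1 = 0" using h1 h2 h3 om_sq by algebra
  moreover have "3 * d2 = 0" using h1 h2 h3 om_sq by algebra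
  ultimately have "x 0 = y 0" "x 1 = y 1" "x 2 = y 2" by (simp_all add: d0_def d1_def d2_def)
  then show ?thesis
  proof -
    have "x i = y i" for i
    proof -
      consider "i = 0" | "i = 1" | "i = 2" | "3 \<le> i" by arith
      then show ?thesis using \<open>x 0 = y 0\<close> \<open>x 1 = y 1\<close> \<open>x 2 = y 2\<close> x y by cases auto
    qed
    then show ?thesis by blast
  qed
qed



lemma cnj_om2: "cnj (om^2) = om"
  by (simp add: cnj_om power_mult[symmetric] om4)

lemma key_alg:
  fixes a b c u v w :: complex
  assumes b: "b = -2*a" and a: "a \<noteq> 0"
    and u: "u = a + b + c" and v: "v = a + om*(b + om*c)" and w: "w = a + om^2*(b + om^2*c)"
    and uu: "u * cnj u = 1" and vv: "v = 0 \<or> v * cnj v = 1" and ww: "w = 0 \<or> w * cnj w = 1"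
  shows "c = -2*a \<and> 3*a = v"
proof -
  have E0: "3*u + (2+om^2)*v + (2+om)*w = 0" using b u v w om_sq by algebra
  have E0c: "3*cnj u + (2+om)*cnj v + (2+om^2)*cnj w = 0"
  proof -
    have "cnj (3*u + (2+om^2)*v + (2+om)*w) = 0" using E0 by simp
    then show ?thesis by (simp add: cnj_om cnj_om2 om4)
  qed
  have v0: "v \<noteq> 0"
  proof
    assume v0: "v = 0"
    then have "cnj v = 0" by simp
    with v0 have "9 = 3 * (w * cnj w)" using E0 E0c uu om_sq by algebra
    with ww show False by auto
  qed
  have w0: "w \<noteq> 0"
  proof
    assume w0: "w = 0"
    then have "cnj w = 0" by simp
    with w0 have "9 = 3 * (v * cnj v)" using E0 E0c uu om_sq by algebra
    with vv show False by auto
  qed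
  have vv1: "v * cnj v = 1" using vv v0 by auto
  have ww1: "w * cnj w = 1" using ww w0 by auto
  define z where "z = om * v * cnj w"
  have "z^2 + z + 1 = 0" unfolding z_def using E0 E0c uu vv1 ww1 om_sq by algebra
  then have "(z - om) * (z - om^2) = 0" using om_sq by algebra
  then have "z = om \<or> z = om^2" by auto
  then show ?thesis
  proof
    assume "z = om"
    then have "om * (v * cnj w) = om * 1" unfolding z_def by (simp add: mult.assoc)
    then have "v * cnj w = 1" using om_ne0 mult_left_cancel by blast
    then have "v = w" using ww1 by algebra
    then show ?thesis using b u v w E0 om_sq by algebra
  next
    assume "z = om^2"
    then have "om * (v * cnj w) = om * om" unfolding z_def by (simp add: mult.assoc power2_eq_square)
    then have "v * cnj w = om" using om_ne0 mult_left_cancel by blast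
    then have "v = om * w"
    proof -
      assume h: "v * cnj w = om"
      have "v = v * (w * cnj w)" using ww1 by simp
      also have "\<dots> = w * (v * cnj w)" by (simp add: ac_simps)
      finally show ?thesis using h by (simp add: ac_simps)
    qed
    then have "a = 0" using b u v w E0 om_sq by algebra
    with a show ?thesis by simp
  qed
qed


lemma unit_cnj: fixes x :: complex assumes "x^m = 1" "m > 0" shows "x * cnj x = 1"
proof -
  have "norm x = 1" using power_eq_1_iff[OF assms(1)] assms(2) by auto
  then show ?thesis using complex_norm_square[of x] by simp
qed

lemma pow_eventual: fixes x :: complex assumes "\<forall>n\<ge>k0. x^(n+\<mu>) = x^n" shows "x = 0 \<or> x^\<mu> = 1"
proof (cases "x = 0")
  case False
  have "x^k0 * x^\<mu> = x^k0 * 1" using assms by (simp add: power_add)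
  then show ?thesis using False by simp
qed simp

lemma periodic_mult:
  fixes i K N m :: nat
  assumes "\<forall>i\<ge>K. s (i+N) = s i" and "i \<ge> K"
  shows "s (i + m*N) = s i"
proof (induction m)
  case 0 show ?case by simp
next
  case (Suc m)
  have "s (i + Suc m * N) = s ((i + m*N) + N)" by (simp add: algebra_simps)
  also have "\<dots> = s (i + m*N)" using assms by simp
  also have "\<dots> = s i" using Suc by simp
  finally show ?case .
qed

lemma z_ne0: "(z::complex)^3 = 1 \<Longrightarrow> z \<noteq> 0" by auto

lemma om2_cube: "(om^2)^3 = 1"
proof -
  have "(om^2)^3 = (om^3)^2" by (simp only: power_mult[symmetric] mult.commute)
  then show ?thesis by (simp add: om3)
qed

lemma one_cube: "(1::complex)^3 = 1" by simp

lemma fp_lambda: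
  assumes c: "c \<noteq> 0" and fp: "has_finite_period [:a,b,c:]"
  shows "\<exists>\<mu>\<ge>1. \<exists>k0. \<forall>z. z^3 = 1 \<longrightarrow> (\<forall>n\<ge>k0. (z*poly [:a,b,c:] z)^(n+\<mu>) = (z*poly [:a,b,c:] z)^n)"
proof -
  obtain \<mu> k0 where mu: "\<mu> \<ge> 1" and h: "\<forall>n\<ge>k0. circ_pow_e [:a,b,c:] (n + \<mu>) = circ_pow_e [:a,b,c:] n"
    using fp unfolding has_finite_period_def by blast
  have "\<forall>z. z^3 = 1 \<longrightarrow> (\<forall>n\<ge>k0. (z*poly [:a,b,c:] z)^(n+\<mu>) = (z*poly [:a,b,c:] z)^n)"
  proof (intro allI impI)
    fix z n :: _ assume z: "z^3 = (1::complex)" and n: "k0 \<le> n"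
    have "Fo z (circ_pow_e [:a,b,c:] (n + \<mu>)) = Fo z (circ_pow_e [:a,b,c:] n)" using h n by simp
    then have "(z*poly [:a,b,c:] z)^(n+\<mu>) * z^2 = (z*poly [:a,b,c:] z)^n * z^2"
      unfolding Fo_pow[OF c z] .
    then show "(z*poly [:a,b,c:] z)^(n+\<mu>) = (z*poly [:a,b,c:] z)^n" using z_ne0[OF z] by simp
  qed
  then show ?thesis using mu by blast
qed

lemma fp_from:
  assumes c: "c \<noteq> 0" and l1: "(poly [:a,b,c:] 1)^\<mu> = 1"
    and l2: "(om * poly [:a,b,c:] om)^\<mu> = 1" and l3: "(om^2 * poly [:a,b,c:] (om^2))^\<mu> = 1"
  shows "circ_pow_e [:a,b,c:] (n+\<mu>) = circ_pow_e [:a,b,c:] n"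
proof (rule Fo_inv)
  show "\<And>i. 3 \<le> i \<Longrightarrow> circ_pow_e [:a, b, c:] (n + \<mu>) i = 0" by (rule circ_supp[OF c])
  show "\<And>i. 3 \<le> i \<Longrightarrow> circ_pow_e [:a, b, c:] n i = 0" by (rule circ_supp[OF c])
  show "Fo 1 (circ_pow_e [:a, b, c:] (n + \<mu>)) = Fo 1 (circ_pow_e [:a, b, c:] n)"
    unfolding Fo_pow[OF c one_cube] using l1 by (simp add: power_add)
  show "Fo om (circ_pow_e [:a, b, c:] (n + \<mu>)) = Fo om (circ_pow_e [:a, b, c:] n)"
    unfolding Fo_pow[OF c om3] using l2 by (simp add: power_add)
  show "Fo (om^2) (circ_pow_e [:a, b, c:] (n + \<mu>)) = Fo (om^2) (circ_pow_e [:a, b, c:] n)"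
    unfolding Fo_pow[OF c om2_cube] using l3 by (simp only: power_add) simp
qed

lemma pow3_cancel: "((om*v)^\<mu>)^3 = v^(3*\<mu>)"
proof -
  have "((om*v)^\<mu>)^3 = (om^3)^\<mu> * v^(3*\<mu>)"
    by (simp add: power_mult_distrib power_mult[symmetric] mult.commute)
  then show ?thesis by (simp add: om3)
qed

lemma pow3_cancel2: "((om^2*v)^\<mu>)^3 = v^(3*\<mu>)"
proof -
  have "((om^2*v)^\<mu>)^3 = ((om^2)^3)^\<mu> * v^(3*\<mu>)"
    by (simp add: power_mult_distrib power_mult[symmetric] mult.commute)
  then show ?thesis by (simp only: om2_cube power_one mult_1)
qed

lemma forward:
  fixes a b c :: complex
  assumes nz: "a*c*(a+b+c) \<noteq> 0" and fp: "has_finite_period [:a,b,c:]"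
    and ep: "eventually_periodic (\<lambda>k. col_sum [:a,b,c:] (k+1))"
  shows "b = -2*a \<and> c = -2*a \<and> root_of_unity (3*a)"
proof -
  have a: "a \<noteq> 0" and c: "c \<noteq> 0" and u0: "a+b+c \<noteq> 0" using nz by auto
  define p where "p = [:a,b,c:]"
  define v where "v = poly [:a,b,c:] om"
  define w where "w = poly [:a,b,c:] (om^2)"
  define u where "u = a+b+c"
  obtain \<mu> k0 where mu: "\<mu> \<ge> 1" and hz: "\<forall>z. z^3 = 1 \<longrightarrow> (\<forall>n\<ge>k0. (z*poly [:a,b,c:] z)^(n+\<mu>) = (z*poly [:a,b,c:] z)^n)"
    using fp_lambda[OF c fp] by blast
  have "\<forall>n\<ge>k0. (1*poly [:a,b,c:] 1)^(n+\<mu>) = (1*poly [:a,b,c:] 1)^n" using hz one_cube by blast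
  then have "\<forall>n\<ge>k0. u^(n+\<mu>) = u^n" by (simp add: u_def add.assoc)
  then have "u = 0 \<or> u^\<mu> = 1" by (rule pow_eventual)
  then have uM: "u^\<mu> = 1" using u0 by (simp add: u_def)
  have "\<forall>n\<ge>k0. (om*v)^(n+\<mu>) = (om*v)^n" using hz om3 unfolding v_def by blast
  then have "om*v = 0 \<or> (om*v)^\<mu> = 1" by (rule pow_eventual)
  then have vr: "v = 0 \<or> v^(3*\<mu>) = 1"
  proof
    assume "om*v = 0" then show ?thesis using om_ne0 by simp
  next
    assume h: "(om*v)^\<mu> = 1"
    show ?thesis using pow3_cancel[of v \<mu>] h by simp
  qed
  have "\<forall>n\<ge>k0. (om^2*w)^(n+\<mu>) = (om^2*w)^n" using hz om2_cube unfolding w_def by blast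
  then have "om^2*w = 0 \<or> (om^2*w)^\<mu> = 1" by (rule pow_eventual)
  then have wr: "w = 0 \<or> w^(3*\<mu>) = 1"
  proof
    assume "om^2*w = 0" then show ?thesis using om_ne0 by simp
  next
    assume h: "(om^2*w)^\<mu> = 1"
    show ?thesis using pow3_cancel2[of w \<mu>] h by simp
  qed
  obtain N K where N: "N \<ge> 1" and hK: "\<forall>i\<ge>K. col_sum p (i + N + 1) = col_sum p (i + 1)"
    using ep unfolding eventually_periodic_def p_def by auto
  define L where "L = 3*\<mu>*N"
  have L0: "L > 0" using mu N by (simp add: L_def)
  have SL: "col_sum p (K+L+1) = col_sum p (K+1)"
    using periodic_mult[of K "\<lambda>i. col_sum p (i+1)" N K "3*\<mu>"] hK by (simp add: L_def mult.assoc)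
  have omL: "om^L = 1"
  proof -
    have "om^L = (om^3)^(\<mu>*N)" by (simp add: L_def power_mult mult.assoc)
    then show ?thesis by (simp add: om3)
  qed
  have uL: "u^L = 1"
  proof -
    have "u^L = (u^\<mu>)^(3*N)" by (simp add: L_def power_mult[symmetric] mult.commute mult.left_commute)
    then show ?thesis by (simp add: uM)
  qed
  have pw: "x^(K+L+1) = x^(K+1)" if "x = 0 \<or> x^(3*\<mu>) = 1" for x :: complex
    using that
  proof
    assume "x = 0" then show ?thesis by simp
  next
    assume h: "x^(3*\<mu>) = 1"
    have "x^(K+L+1) = x^(K+1) * (x^(3*\<mu>))^N" by (simp add: L_def power_add power_mult[symmetric] algebra_simps)
    then show ?thesis using h by simp
  qed
  have vL: "v^(K+L+1) = v^(K+1)" using pw vr by blast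
  have wL: "w^(K+L+1) = w^(K+1)" using pw wr by blast
  have uL1: "u^(K+L) = u^K" "u^(K+L+1) = u^(K+1)" using uL by (simp_all add: power_add)
  have omL1: "om^(2*(K+L)+2) = om^(2*K+2)" "om^(4*(K+L)+4) = om^(4*K+4)"
  proof -
    have "om^(2*(K+L)+2) = om^(2*K+2) * (om^L)^2" by (simp add: power_add power_mult[symmetric] algebra_simps)
    then show "om^(2*(K+L)+2) = om^(2*K+2)" by (simp add: omL)
    have "om^(4*(K+L)+4) = om^(4*K+4) * (om^L)^4" by (simp add: power_add power_mult[symmetric] algebra_simps)
    then show "om^(4*(K+L)+4) = om^(4*K+4)" by (simp add: omL)
  qed
  have C1: "9 * col_sum p (K+1) = 3*of_nat(K+1)*u^K*(2*a+b) - 3*u^(K+1)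
     - (om^2+2*om)*om^(2*K+2)*w^(K+1) - (om+2*om^2)*om^(4*K+4)*v^(K+1)"
    using col_closed[OF c, of a b K] unfolding p_def u_def v_def w_def .
  have C2: "9 * col_sum p (K+L+1) = 3*of_nat(K+L+1)*u^K*(2*a+b) - 3*u^(K+1)
     - (om^2+2*om)*om^(2*K+2)*w^(K+1) - (om+2*om^2)*om^(4*K+4)*v^(K+1)"
    using col_closed[OF c, of a b "K+L"] unfolding p_def u_def[symmetric] v_def[symmetric] w_def[symmetric] uL1 omL1 vL wL .
  have "3 * of_nat L * u^K * (2*a+b) = 0" using C1 C2 SL by (simp add: algebra_simps)
  then have "2*a+b = 0" using L0 u0 by (simp add: u_def)
  then have b: "b = -2*a" using add_eq_0_iff[of "2*a" b] by simp
  have uu: "u * cnj u = 1" using unit_cnj[OF uM] mu by simp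
  have vv: "v = 0 \<or> v * cnj v = 1" using vr unit_cnj[of v "3*\<mu>"] mu by auto
  have ww: "w = 0 \<or> w * cnj w = 1" using wr unit_cnj[of w "3*\<mu>"] mu by auto
  have res: "c = -2*a \<and> 3*a = v"
    by (rule key_alg[OF b a u_def _ _ uu vv ww]) (simp_all add: v_def w_def)
  then have "v \<noteq> 0" using a by auto
  then have "v^(3*\<mu>) = 1" using vr by simp
  then have "root_of_unity (3*a)" using res mu unfolding root_of_unity_def by (intro exI[of _ "3*\<mu>"]) simp
  then show ?thesis using b res by simp
qed

lemma lam_pow:
  assumes c: "c \<noteq> 0" and z: "z^3 = 1"
    and h: "circ_pow_e [:a,b,c:] (k0 + m) = circ_pow_e [:a,b,c:] k0"
    and nz: "z * poly [:a,b,c:] z \<noteq> 0"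
  shows "(z * poly [:a,b,c:] z)^m = 1"
proof -
  have "Fo z (circ_pow_e [:a,b,c:] (k0 + m)) = Fo z (circ_pow_e [:a,b,c:] k0)" using h by simp
  then have "(z*poly [:a,b,c:] z)^k0 * (z*poly [:a,b,c:] z)^m * z^2 = (z*poly [:a,b,c:] z)^k0 * 1 * z^2"
    unfolding Fo_pow[OF c z] by (simp add: power_add)
  then show ?thesis using z_ne0[OF z] nz by simp
qed

lemma backward:
  fixes a b c :: complex
  assumes a: "a \<noteq> 0" and b: "b = -2*a" and c: "c = -2*a" and r: "root_of_unity (3*a)"
  shows "has_finite_period [:a,b,c:] \<and> eventually_periodic (\<lambda>k. col_sum [:a,b,c:] (k+1))
     \<and> 6 dvd circ_period [:a,b,c:] \<and> (3*a)^circ_period [:a,b,c:] = 1"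
proof -
  obtain n where n: "n > 0" and rn: "(3*a)^n = 1" using r unfolding root_of_unity_def by blast
  have c0: "c \<noteq> 0" using a c by simp
  have pu: "poly [:a,b,c:] 1 = -3*a" using b c by simp
  have pv: "poly [:a,b,c:] om = 3*a" using b c om_sq by simp algebra
  have pw: "poly [:a,b,c:] (om^2) = 3*a" using b c om_sq by simp algebra
  define M where "M = 6*n"
  have M1: "M \<ge> 1" using n by (simp add: M_def)
  have tM: "(3*a)^M = 1"
  proof -
    have "(3*a)^M = ((3*a)^n)^6" by (simp only: M_def mult.commute[of 6 n] power_mult)
    then show ?thesis using rn by simp
  qed
  have omM: "om^M = 1"
  proof -
    have "om^M = (om^3)^(2*n)" by (simp add: M_def power_mult[symmetric])
    then show ?thesis by (simp add: om3)
  qed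
  have muM: "(-3*a)^M = 1"
  proof -
    have six: "6*n = 2*(3*n)" by simp
    have "(-3*a)^M = ((-3*a)^2)^(3*n)" by (simp only: M_def six power_mult)
    also have "\<dots> = ((3*a)^2)^(3*n)" by (simp add: power2_eq_square)
    also have "\<dots> = (3*a)^M" by (simp only: M_def six power_mult)
    finally show ?thesis using tM by simp
  qed
  have l1: "(poly [:a,b,c:] 1)^M = 1" unfolding pu by (rule muM)
  have l2: "(om * poly [:a,b,c:] om)^M = 1" using pv omM tM by (simp add: power_mult_distrib)
  have l3: "(om^2 * poly [:a,b,c:] (om^2))^M = 1" using pw omM tM
    by (simp add: power_mult_distrib power_mult[symmetric] mult.commute[of 2 M] power_mult)
  have per: "\<And>m. circ_pow_e [:a,b,c:] (m+M) = circ_pow_e [:a,b,c:] m" by (rule fp_from[OF c0 l1 l2 l3])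
  have Q: "M \<ge> 1 \<and> (\<exists>k0. \<forall>m\<ge>k0. circ_pow_e [:a,b,c:] (m + M) = circ_pow_e [:a,b,c:] m)"
    using M1 per by blast
  then have fp: "has_finite_period [:a,b,c:]" unfolding has_finite_period_def by blast
  have ep: "eventually_periodic (\<lambda>k. col_sum [:a,b,c:] (k+1))"
    unfolding eventually_periodic_def
  proof (intro exI[of _ M] conjI M1 exI[of _ 0] allI impI)
    fix i :: nat
    have ab: "2*a+b = 0" using b by simp
    have e1: "(-3*a)^(i+M+1) = (-3*a)^(i+1)" using muM by (simp add: power_add)
    have e2: "(3*a)^(i+M+1) = (3*a)^(i+1)" using tM by (simp add: power_add)
    have e3: "om^(2*(i+M)+2) = om^(2*i+2)"
    proof -
      have "om^(2*(i+M)+2) = om^(2*i+2) * (om^M)^2" by (simp add: power_add power_mult[symmetric] algebra_simps)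
      then show ?thesis by (simp add: omM)
    qed
    have e4: "om^(4*(i+M)+4) = om^(4*i+4)"
    proof -
      have "om^(4*(i+M)+4) = om^(4*i+4) * (om^M)^4" by (simp add: power_add power_mult[symmetric] algebra_simps)
      then show ?thesis by (simp add: omM)
    qed
    have "9 * col_sum [:a,b,c:] (i+M+1) = 9 * col_sum [:a,b,c:] (i+1)"
    proof -
      have uabc: "a+b+c = -3*a" using b c by simp
      show ?thesis
        unfolding col_closed[OF c0, of a b "i+M"] col_closed[OF c0, of a b i] pv pw ab uabc e1 e2 e3 e4
        by simp
    qed
    then show "col_sum [:a,b,c:] (i + M + 1) = col_sum [:a,b,c:] (i + 1)" by simp
  qed
  define m where "m = circ_period [:a,b,c:]"
  have Qm: "m \<ge> 1 \<and> (\<exists>k0. \<forall>n\<ge>k0. circ_pow_e [:a,b,c:] (n + m) = circ_pow_e [:a,b,c:] n)"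
    unfolding m_def circ_period_def by (rule LeastI[of _ M]) (use Q in blast)
  then obtain k0 where hk: "circ_pow_e [:a,b,c:] (k0 + m) = circ_pow_e [:a,b,c:] k0" by auto
  have f1: "(1 * poly [:a,b,c:] 1)^m = 1" by (rule lam_pow[OF c0 one_cube hk]) (unfold mult_1 pu, use a in simp)
  have f2: "(om * poly [:a,b,c:] om)^m = 1" by (rule lam_pow[OF c0 om3 hk]) (use pv a om_ne0 in simp)
  have f3: "(om^2 * poly [:a,b,c:] (om^2))^m = 1" by (rule lam_pow[OF c0 om2_cube hk]) (use pw a om_ne0 in simp)
  have g2: "om^m * (3*a)^m = 1" using f2 pv by (simp add: power_mult_distrib)
  have g3: "om^m * (om^m * (3*a)^m) = 1" using f3 pw by (simp add: power_mult_distrib power_mult[symmetric] mult.commute[of 2 m] power_mult power2_eq_square mult.assoc)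
  have omm: "om^m = 1" using g2 g3 by simp
  have am: "(3*a)^m = 1" using g2 omm by simp
  have f1': "(-3*a)^m = 1" using f1 unfolding mult_1 pu .
  have "-3*a = (-1) * (3*a)" by simp
  then have "(-3*a)^m = (-1)^m * (3*a)^m" by (simp only: power_mult_distrib)
  then have "(-1)^m * (3*a)^m = 1" using f1' by simp
  then have m1: "(-1::complex)^m = 1" using am by simp
  have ev: "even m"
  proof (rule ccontr)
    assume "odd m" then have "(-1::complex)^m = -1" by simp
    with m1 show False by simp
  qed
  have d3: "3 dvd m"
  proof -
    have "om^(m mod 3) = 1" using omm om_pow_mod[of m] by simp
    moreover have "m mod 3 = 0 \<or> m mod 3 = 1 \<or> m mod 3 = 2" by arith
    ultimately have "m mod 3 = 0" using om_ne1 om2_ne1 by auto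
    then show ?thesis by auto
  qed
  have "6 dvd m" using ev d3 by presburger
  then show ?thesis using fp ep am unfolding m_def by blast
qed


theorem proposition13:
  fixes a b c :: complex
  assumes "a * c * (a + b + c) \<noteq> 0"
  shows "((has_finite_period [:a, b, c:] \<and> eventually_periodic (\<lambda>k. col_sum [:a, b, c:] (k + 1)))
           \<longleftrightarrow> (b = -2 * a \<and> c = -2 * a \<and> root_of_unity (3 * a)))
       \<and> ((b = -2 * a \<and> c = -2 * a \<and> root_of_unity (3 * a)) \<longrightarrow>
           6 dvd circ_period [:a, b, c:] \<and> (3 * a) ^ circ_period [:a, b, c:] = 1)"
proof -
  have a: "a \<noteq> 0" using assms by auto
  have 1: "(has_finite_period [:a, b, c:] \<and> eventually_periodic (\<lambda>k. col_sum [:a, b, c:] (k + 1)))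
           \<Longrightarrow> (b = -2 * a \<and> c = -2 * a \<and> root_of_unity (3 * a))"
    using forward[OF assms] by blast
  have 2: "(b = -2 * a \<and> c = -2 * a \<and> root_of_unity (3 * a)) \<Longrightarrow>
      has_finite_period [:a,b,c:] \<and> eventually_periodic (\<lambda>k. col_sum [:a,b,c:] (k+1))
     \<and> 6 dvd circ_period [:a,b,c:] \<and> (3*a)^circ_period [:a,b,c:] = 1"
    using backward[OF a] by blast
  show ?thesis using 1 2 by blast
qed

end
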